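(* In the Popularity Adjusted Block Model described in the context, suppose $\operatorname{rank}(\boldsymbol\Theta)=K^2$ and let $\boldsymbol\Xi\in\mathbb R^{n\times K^2}$ be a matrix of orthonormal eigenvectors of $\boldsymbol\Theta$ for its $K^2$ nonzero eigenvalues, with rows $\boldsymbol\xi_{i\cdot}$. Let $\tau_{ij}=|\cos(\boldsymbol\xi_{i\cdot},\boldsymbol\xi_{j\cdot})|$. Then for $i,j\in[n]$ (with $\boldsymbol\xi_{i\cdot},\boldsymbol\xi_{j\cdot}\neq0$), $$\tau_{ij}=\begin{cases}\left|\dfrac{D_{\boldsymbol P_{\boldsymbol c^\ast(i)}}(\boldsymbol\lambda_{i\cdot},\boldsymbol\lambda_{j\cdot})}{D^{1/2}_{\boldsymbol P_{\boldsymbol c^\ast(i)}}(\boldsymbol\lambda_{i\cdot},\boldsymbol\lambda_{i\cdot})\,D^{1/2}_{\boldsymbol P_{\boldsymbol c^\ast(i)}}(\boldsymbol\lambda_{j\cdot},\boldsymbol\lambda_{j\cdot})}\right|, & \boldsymbol c^\ast(i)=\boldsymbol c^\ast(j),\\[2mm] 0, & \boldsymbol c^\ast(i)\ne\boldsymbol c^\ast(j).\end{cases}$$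
   Context: Notation: $[m]=\{1,\dots,m\}$. Popularity Adjusted Block Model: integers $n$, $K\ge2$, a label vector $\boldsymbol c^\ast\in[K]^n$, a popularity matrix $\boldsymbol\Lambda=(\lambda_{ik})\in[0,1]^{n\times K}$ with rows $\boldsymbol\lambda_{i\cdot}\in\mathbb R^K$. The edge probability matrix is $\boldsymbol\Theta=(\theta_{ij})_{n\times n}$, $\theta_{ij}=\lambda_{i\boldsymbol c^\ast(j)}\lambda_{j\boldsymbol c^\ast(i)}$. For $k\in[K]$, $\boldsymbol\Lambda^{(k,\cdot)}$ is the submatrix of $\boldsymbol\Lambda$ consisting of the rows $i$ with $\boldsymbol c^\ast(i)=k$, $\boldsymbol P_k=(\boldsymbol\Lambda^{(k,\cdot)\top}\boldsymbol\Lambda^{(k,\cdot)})^{-1}$, and $D_{\boldsymbol P_k}(\boldsymbol x,\boldsymbol y)=\boldsymbol x^\top\boldsymbol P_k\boldsymbol y$ for $\boldsymbol x,\boldsymbol y\in\mathbb R^K$. $\cos(\boldsymbol x,\boldsymbol y)=\boldsymbol x^\top\boldsymbol y/(\|\boldsymbol x\|\|\boldsymbol y\|)$. *)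

theory Defs
  imports "HOL-Analysis.Analysis"
begin

text \<open>Nodes are indexed by a finite type 'n,
 communities by a finite type 'k (so K = CARD('k)).\<close>

definition pabm_theta :: "real^'k^'n \<Rightarrow> ('n \<Rightarrow> 'k) \<Rightarrow> real^'n^'n" where
  "pabm_theta Lam c = (\<chi> i j. Lam $ i $ (c j) * Lam $ j $ (c i))"

definition block_gram :: "real^'k^'n \<Rightarrow> ('n \<Rightarrow> 'k) \<Rightarrow> 'k \<Rightarrow> real^'k^'k" where
  "block_gram Lam c k = (\<chi> a b. \<Sum>i\<in>{i. c i = k}. Lam $ i $ a * Lam $ i $ b)"

definition pabm_P :: "real^'k^'n \<Rightarrow> ('n \<Rightarrow> 'k) \<Rightarrow> 'k \<Rightarrow> real^'k^'k" where
  "pabm_P Lam c k = matrix_inv (block_gram Lam c k)"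

definition D_form :: "real^'k^'k \<Rightarrow> real^'k \<Rightarrow> real^'k \<Rightarrow> real" where
  "D_form P x y = x \<bullet> (P *v y)"

definition cos_sim :: "real^'m \<Rightarrow> real^'m \<Rightarrow> real" where
  "cos_sim x y = (x \<bullet> y) / (norm x * norm y)"

end

theory Submission
  imports Defs
begin

theorem corollary1:
  fixes Lam :: "real^'k^'n" and c :: "'n \<Rightarrow> 'k"
    and Xi :: "real^'m^'n" and d :: "'m \<Rightarrow> real"
    and i j :: 'n
  assumes K2: "CARD('k) \<ge> 2"
    and Lam_range: "\<forall>i a. 0 \<le> Lam $ i $ a \<and> Lam $ i $ a \<le> 1"
    and rank: "rank (pabm_theta Lam c) = CARD('k)^2"
    and m_card: "CARD('m) = CARD('k)^2"
    and orth: "transpose Xi ** Xi = mat 1"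
    and eig: "\<forall>l. pabm_theta Lam c *v column l Xi = d l *\<^sub>R column l Xi \<and> d l \<noteq> 0"
    and nz: "Xi $ i \<noteq> 0" "Xi $ j \<noteq> 0"
  shows "\<bar>cos_sim (Xi $ i) (Xi $ j)\<bar> =
    (if c i = c j then
       \<bar>D_form (pabm_P Lam c (c i)) (Lam $ i) (Lam $ j) /
         (sqrt (D_form (pabm_P Lam c (c i)) (Lam $ i) (Lam $ i)) *
          sqrt (D_form (pabm_P Lam c (c i)) (Lam $ j) (Lam $ j)))\<bar>
     else 0)"
proof -
  define \<Theta> where "\<Theta> = pabm_theta Lam c"
  define v :: "'k \<Rightarrow> 'k \<Rightarrow> real^'n" where "v k l = (\<chi> i. if c i = k then Lam$i$l else 0)" for k l
  define V where "V = (\<lambda>(k,l). v k l) ` UNIV"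
  define X where "X = (\<lambda>l. column l Xi) ` UNIV"
  have colT: "column j \<Theta> = (\<Sum>k\<in>UNIV. Lam$j$k *\<^sub>R v k (c j))" for j
  proof -
    have "(\<Sum>k\<in>UNIV. Lam$j$k * (if c i = k then Lam$i$(c j) else 0)) = Lam$i$(c j) * Lam$j$(c i)" for i
      by (simp add: if_distrib[where f="\<lambda>x. _ * x"] mult.commute sum.delta cong: if_cong)
    then show ?thesis
      by (simp add: vec_eq_iff column_def \<Theta>_def pabm_theta_def v_def sum_component)
  qed
  have Tspan: "\<Theta> *v x \<in> span V" for x
  proof -
    have "\<Theta> *v x = (\<Sum>j\<in>UNIV. x$j *\<^sub>R column j \<Theta>)"
      by (simp add: matrix_mult_sum scalar_mult_eq_scaleR)
    also have "\<dots> \<in> span V"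
      unfolding colT
      by (intro span_sum span_scale) (auto simp: V_def intro: span_base)
    finally show ?thesis .
  qed
  have XV: "X \<subseteq> span V"
  proof
    fix w assume "w \<in> X"
    then obtain l where w: "w = column l Xi" by (auto simp: X_def)
    have "w = (1 / d l) *\<^sub>R (\<Theta> *v w)" using eig w by (simp add: \<Theta>_def)
    then show "w \<in> span V" using Tspan by (metis span_scale)
  qed
  have orthcol: "column a Xi \<bullet> column b Xi = (if a = b then 1 else 0)" for a b
  proof -
    have "column a Xi \<bullet> column b Xi = (transpose Xi ** Xi) $ a $ b"
      by (simp add: inner_vec_def matrix_matrix_mult_def transpose_def column_def)
    then show ?thesis using orth by (simp add: mat_def)
  qed
  have injX: "inj (\<lambda>l. column l Xi)"
    by (rule injI) (metis orthcol zero_neq_one)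
  have indX: "independent X"
    apply (rule pairwise_orthogonal_independent)
     apply (auto simp: X_def pairwise_def orthogonal_def orthcol)
    by (metis inner_zero_left orthcol zero_neq_one)
  have cardX: "card X = CARD('k)^2"
    using injX m_card by (simp add: X_def card_image)
  have cardV: "card V \<le> CARD('k)^2"
  proof -
    have "card V \<le> card (UNIV::('k\<times>'k) set)" unfolding V_def by (rule card_image_le) simp
    then show ?thesis by (simp add: card_prod UNIV_Times_UNIV[symmetric] power2_eq_square del: UNIV_Times_UNIV)
  qed
  have finV: "finite V" unfolding V_def by simp
  have dimX: "dim (span X) = CARD('k)^2"
    using indX cardX dim_span_eq_card_independent by metis
  have sXV: "span X \<subseteq> span V"
    using XV by (simp add: span_minimal)
  have d1: "dim (span V) \<le> card V"
    using finV by (intro dim_le_card) auto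
  have d2: "dim (span X) \<le> dim (span V)"
    using sXV by (rule dim_subset)
  have dimV: "dim (span V) = CARD('k)^2"
    using d1 d2 dimX cardV by linarith
  have spanXV: "span X = span V"
    using sXV dimV dimX by (intro subspace_dim_equal) auto
  have indV: "independent V"
    using finV d1 dimV cardV by (intro card_le_dim_spanning[of V "span V"]) (auto intro: span_base)
  have cardV2: "card V = card (UNIV :: ('k \<times> 'k) set)"
    using d1 dimV cardV by (simp add: power2_eq_square card_prod UNIV_Times_UNIV[symmetric] del: UNIV_Times_UNIV)
  have injv: "inj (\<lambda>(k,l). v k l)"
    using cardV2 unfolding V_def by (intro eq_card_imp_inj_on) auto
  have injvk: "inj (v k)" for k
    using injv by (auto simp: inj_def)
  have vindep: "x = 0" if "(\<Sum>a\<in>UNIV. x$a *\<^sub>R v k a) = 0" for k x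
  proof -
    have ind: "independent (range (v k))"
      using indV by (rule independent_mono) (auto simp: V_def)
    define u where "u w = x $ inv (v k) w" for w
    have "(\<Sum>w\<in>range (v k). u w *\<^sub>R w) = (\<Sum>a\<in>UNIV. u (v k a) *\<^sub>R v k a)"
      using injvk by (simp add: sum.reindex)
    also have "\<dots> = 0" using that injvk by (simp add: u_def)
    finally have "\<forall>w\<in>range (v k). u w = 0"
      using ind unfolding independent_explicit by blast
    then show "x = 0" using injvk by (auto simp: u_def vec_eq_iff)
  qed
  define G where "G k = block_gram Lam c k" for k
  have vinner: "v k l \<bullet> v k' a = (if k = k' then G k $ l $ a else 0)" for k l k' a
    by (auto simp: v_def G_def block_gram_def inner_vec_def if_distrib[where f="\<lambda>x. _ * x"] sum.inter_filter[symmetric] cong: if_cong)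
  have Ginj: "x = 0" if "G k *v x = 0" for k x
  proof -
    define w where "w = (\<Sum>a\<in>UNIV. x$a *\<^sub>R v k a)"
    have "w \<bullet> w = (\<Sum>a\<in>UNIV. \<Sum>b\<in>UNIV. x$a * x$b * (v k b \<bullet> v k a))"
      by (simp add: w_def inner_sum_left inner_sum_right sum_distrib_left mult.assoc)
    also have "\<dots> = (\<Sum>a\<in>UNIV. \<Sum>b\<in>UNIV. x$a * (G k$a$b * x$b))"
      by (simp add: vinner mult_ac G_def block_gram_def)
    also have "\<dots> = x \<bullet> (G k *v x)"
      by (simp add: inner_vec_def matrix_vector_mult_def sum_distrib_left)
    finally have "w \<bullet> w = x \<bullet> (G k *v x)" .
    then have "w = 0" using that by simp
    then show ?thesis using vindep[where k=k and x=x] unfolding w_def by simp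
  qed
  have Ginv: "G k ** pabm_P Lam c k = mat 1" for k
  proof -
    have "invertible (G k)"
      unfolding invertible_left_inverse using Ginj by (simp add: matrix_left_invertible_ker)
    then show ?thesis unfolding pabm_P_def G_def[symmetric] matrix_inv_def invertible_def
      by (metis (mono_tags, lifting) someI_ex)
  qed
  define y where "y b = pabm_P Lam c (c b) *v (Lam $ b)" for b
  define p where "p b = (\<Sum>a\<in>UNIV. (y b) $ a *\<^sub>R v (c b) a)" for b
  have porth: "v k l \<bullet> (axis b 1 - p b) = 0" for k l b
  proof -
    have e: "v k l \<bullet> axis b 1 = (if c b = k then Lam$b$l else 0)"
      by (simp add: inner_axis v_def)
    have "v k l \<bullet> p b = (if c b = k then (G k *v y b) $ l else 0)"
      by (auto simp: p_def inner_sum_right vinner matrix_vector_mult_def mult.commute)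
    also have "\<dots> = (if c b = k then Lam$b$l else 0)"
      using Ginv by (simp add: y_def matrix_vector_mul_assoc)
    finally show ?thesis using e by (simp add: inner_diff_right)
  qed
  have pspan: "p b \<in> span X" for b
    unfolding spanXV p_def by (intro span_sum span_scale) (auto simp: V_def intro: span_base)
  have proj: "Xi *v (transpose Xi *v w) = w" if "w \<in> span X" for w
    using that
  proof (induction rule: span_induct)
    case base
    then show ?case unfolding subspace_def
      by (simp add: matrix_vector_right_distrib matrix_vector_mult_scaleR del: transpose_matrix_vector)
  next
    case (step x)
    then obtain l where x: "x = column l Xi" by (auto simp: X_def)
    have "Xi *v (transpose Xi *v (Xi *v axis l 1)) = Xi *v axis l 1"
      by (simp only: matrix_vector_mul_assoc orth matrix_vector_mul_lid)
    then show ?case by (simp only: x matrix_vector_mult_basis)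
  qed
  have kill: "transpose Xi *v (axis b 1 - p b) = 0" for b
  proof -
    have col: "column l Xi \<bullet> (axis b 1 - p b) = 0" for l
    proof -
      have cV: "column l Xi \<in> span V" using XV by (auto simp: X_def)
      have "\<forall>y\<in>V. orthogonal (axis b 1 - p b) y"
      proof
        fix y assume "y \<in> V"
        then obtain k l' where "y = v k l'" by (auto simp: V_def)
        then show "orthogonal (axis b 1 - p b) y"
          using porth[of k l' b] by (simp add: orthogonal_def inner_commute)
      qed
      then have "orthogonal (axis b 1 - p b) (column l Xi)"
        using orthogonal_to_span[OF cV] by blast
      then show ?thesis by (simp add: orthogonal_def inner_commute)
    qed
    have "(transpose Xi *v z) $ l = column l Xi \<bullet> z" for z l
      by (simp add: matrix_vector_mult_def transpose_def column_def inner_vec_def mult.commute del: transpose_matrix_vector)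
    then show ?thesis using col by (simp add: vec_eq_iff del: transpose_matrix_vector)
  qed
  have key: "Xi $ a \<bullet> Xi $ b = (if c a = c b then D_form (pabm_P Lam c (c b)) (Lam $ a) (Lam $ b) else 0)" for a b
  proof -
    have r: "Xi $ b = transpose Xi *v axis b 1"
      by (simp add: vec_eq_iff vector_matrix_mult_def axis_def if_distrib[where f="\<lambda>x. x * _"] cong: if_cong)
    have "transpose Xi *v axis b 1 = transpose Xi *v p b"
      using kill[of b] by (simp add: matrix_vector_mult_diff_distrib del: transpose_matrix_vector)
    then have "Xi *v Xi $ b = p b" using proj[OF pspan] r by simp
    then have "(Xi *v Xi $ b) $ a = p b $ a" by simp
    then show ?thesis
      by (simp add: matrix_vector_mult_def inner_vec_def p_def v_def D_form_def y_def sum_component mult.commute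
          if_distrib[where f="\<lambda>x. _ * x"] cong: if_cong)
  qed
  show ?thesis
    using key[of i j] key[of i i] key[of j j]
    by (simp add: cos_sim_def norm_eq_sqrt_inner)
qed

end
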